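(* Let $z,\tilde z\in\mathbb{R}^{2d}$, $n\ge1$, and assume $U\colon\mathbb{R}^d\to\mathbb{R}$ is twice continuously differentiable with $\nabla U$ being $L$-Lipschitz. Let $y=(y_0,\dots,y_n)$ be the optimized trajectory and $\Psi^n_{z,\tilde z}$ the coalescence map defined by $(y_1,\dots,y_n)$. Writing $y_k=(u_k,w_k)$ with $u_k,w_k\in\mathbb{R}^d$, for every $\xi\in\mathbb{R}^{2dn}$, \[ |\Psi^n_{z,\tilde z}(\xi)-\xi|^2\le 2\sum_{k=1}^n|E_k|^2+\frac{h^2L^2}{1-e^{-\gamma h}}\sum_{k=0}^{n-1}|u_k|^2. \]
   Context: Fix $d\ge 1$, $\gamma>0$, $h>0$ and $U\in C^2(\mathbb{R}^d)$. Points of $\mathbb{R}^{2d}$ are $z=(x,v)$. The OBABO one-step map is $\Psi_z(\xi)=(\Psi^X_z(\xi^{(1)}),\Psi^V_z(\xi^{(1)},\xi^{(2)}))$ for $z=(x,v)$, $\xi=(\xi^{(1)},\xi^{(2)})\in\mathbb{R}^d\times\mathbb{R}^d$, with $\Psi^X_z(\xi^{(1)})=x+he^{-\gamma h/2}v+(1-e^{-\gamma h})^{1/2}h\,\xi^{(1)}-\tfrac{h^2}{2}\nabla U(x)$ and $\Psi^V_z(\xi^{(1)},\xi^{(2)})=e^{-\gamma h}v+(1-e^{-\gamma h})^{1/2}(e^{-\gamma h/2}\xi^{(1)}+\xi^{(2)})-\tfrac h2 e^{-\gamma h/2}\bigl(\nabla U(x)+\nabla U(\Psi^X_z(\xi^{(1)}))\bigr)$.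 $\Psi^n_z\colon\mathbb{R}^{2dn}\to\mathbb{R}^{2d}$: $\Psi^1_z=\Psi_z$, $\Psi^{n+1}_z(\xi_1,\dots,\xi_{n+1})=\Psi_{\Psi^n_z(\xi_1,\dots,\xi_n)}(\xi_{n+1})$, $\Psi^0_z\equiv z$. For $y_1,\dots,y_n\in\mathbb{R}^{2d}$ with $y_n=0$, the coalescence map defined by $y$ is the unique $\Psi^n_{z,\tilde z}\colon\mathbb{R}^{2dn}\to\mathbb{R}^{2dn}$ with $\Psi^k_{\tilde z}(\tilde\zeta_1,\dots,\tilde\zeta_k)=\Psi^k_z(\xi_1,\dots,\xi_k)+y_k$ ($k=1,\dots,n$) where $\tilde\zeta=\Psi^n_{z,\tilde z}(\xi)$. Let $A_h=\begin{pmatrix} I_d & he^{-\gamma h/2}I_d\\ 0 & e^{-\gamma h}I_d\end{pmatrix}$, $L_h=(1-e^{-\gamma h})^{1/2}\begin{pmatrix} hI_d & 0\\ e^{-\gamma h/2}I_d & I_d\end{pmatrix}$, $\Sigma_{h,n}=\sum_{k=1}^n A_h^{n-k}L_hL_h^T(A_h^T)^{n-k}$ (positive definite), $\Delta z=\tilde z-z$, and $E_k=L_h^T(A_h^T)^{n-k}\Sigma_{h,n}^{-1}A_h^n\Delta z$ for $k=1,\dots,n$. The optimized trajectory is $y_0=\Delta z$, $y_{k+1}=A_hy_k-L_hE_{k+1}$ for $k=0,\dots,n-1$; it satisfies $y_n=0$. *)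

theory Defs
  imports "HOL-Analysis.Analysis"
begin

type_synonym 'd st = "(real^('d::finite)) \<times> (real^'d)"

text \<open>OBABO one-step map; G is the gradient of U.\<close>
definition PsiX :: "real \<Rightarrow> real \<Rightarrow> (real^('d::finite) \<Rightarrow> real^'d) \<Rightarrow> 'd st \<Rightarrow> real^'d \<Rightarrow> real^'d" where
  "PsiX \<gamma> h G z a = fst z + (h * exp (-\<gamma>*h/2)) *\<^sub>R snd z
     + (sqrt (1 - exp (-\<gamma>*h)) * h) *\<^sub>R a - (h^2/2) *\<^sub>R G (fst z)"

definition PsiV :: "real \<Rightarrow> real \<Rightarrow> (real^('d::finite) \<Rightarrow> real^'d) \<Rightarrow> 'd st \<Rightarrow> real^'d \<Rightarrow> real^'d \<Rightarrow> real^'d" where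
  "PsiV \<gamma> h G z a b = exp (-\<gamma>*h) *\<^sub>R snd z
     + sqrt (1 - exp (-\<gamma>*h)) *\<^sub>R (exp (-\<gamma>*h/2) *\<^sub>R a + b)
     - (h/2 * exp (-\<gamma>*h/2)) *\<^sub>R (G (fst z) + G (PsiX \<gamma> h G z a))"

definition Psi :: "real \<Rightarrow> real \<Rightarrow> (real^('d::finite) \<Rightarrow> real^'d) \<Rightarrow> 'd st \<Rightarrow> 'd st \<Rightarrow> 'd st" where
  "Psi \<gamma> h G z \<xi> = (PsiX \<gamma> h G z (fst \<xi>), PsiV \<gamma> h G z (fst \<xi>) (snd \<xi>))"

text \<open>n-step map: a point of R^(2dn) is a list of n elements of R^(2d);
  Psi^k_z(xi_1..xi_k) = PsiN z (take k xs), PsiN z [] = z.\<close>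
definition PsiN :: "real \<Rightarrow> real \<Rightarrow> (real^('d::finite) \<Rightarrow> real^'d) \<Rightarrow> 'd st \<Rightarrow> 'd st list \<Rightarrow> 'd st" where
  "PsiN \<gamma> h G z xs = foldl (Psi \<gamma> h G) z xs"

text \<open>Coalescence map defined by y_1..y_n (the unique such map).\<close>
definition coal :: "real \<Rightarrow> real \<Rightarrow> (real^('d::finite) \<Rightarrow> real^'d) \<Rightarrow> nat \<Rightarrow> ('d::finite) st \<Rightarrow> 'd st \<Rightarrow> (nat \<Rightarrow> 'd st)
    \<Rightarrow> 'd st list \<Rightarrow> 'd st list" where
  "coal \<gamma> h G n z zt y xs = (THE zs. length zs = n \<and>
      (\<forall>k\<in>{1..n}. PsiN \<gamma> h G zt (take k zs) = PsiN \<gamma> h G z (take k xs) + y k))"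

text \<open>Block matrices A_h, L_h and their transposes, acting on R^(2d) = R^d x R^d.\<close>
definition Ah :: "real \<Rightarrow> real \<Rightarrow> ('d::finite) st \<Rightarrow> 'd st" where
  "Ah \<gamma> h p = (fst p + (h * exp (-\<gamma>*h/2)) *\<^sub>R snd p, exp (-\<gamma>*h) *\<^sub>R snd p)"

definition AhT :: "real \<Rightarrow> real \<Rightarrow> ('d::finite) st \<Rightarrow> 'd st" where
  "AhT \<gamma> h p = (fst p, (h * exp (-\<gamma>*h/2)) *\<^sub>R fst p + exp (-\<gamma>*h) *\<^sub>R snd p)"

definition Lh :: "real \<Rightarrow> real \<Rightarrow> ('d::finite) st \<Rightarrow> 'd st" where
  "Lh \<gamma> h p = sqrt (1 - exp (-\<gamma>*h)) *\<^sub>R (h *\<^sub>R fst p, exp (-\<gamma>*h/2) *\<^sub>R fst p + snd p)"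

definition LhT :: "real \<Rightarrow> real \<Rightarrow> ('d::finite) st \<Rightarrow> 'd st" where
  "LhT \<gamma> h p = sqrt (1 - exp (-\<gamma>*h)) *\<^sub>R (h *\<^sub>R fst p + exp (-\<gamma>*h/2) *\<^sub>R snd p, snd p)"

definition Sigma_hn :: "real \<Rightarrow> real \<Rightarrow> nat \<Rightarrow> ('d::finite) st \<Rightarrow> 'd st" where
  "Sigma_hn \<gamma> h n p = (\<Sum>k=1..n. (Ah \<gamma> h ^^ (n-k)) (Lh \<gamma> h (LhT \<gamma> h ((AhT \<gamma> h ^^ (n-k)) p))))"

definition Ek :: "real \<Rightarrow> real \<Rightarrow> nat \<Rightarrow> ('d::finite) st \<Rightarrow> 'd st \<Rightarrow> nat \<Rightarrow> 'd st" where
  "Ek \<gamma> h n z zt k = LhT \<gamma> h ((AhT \<gamma> h ^^ (n-k))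
      (inv (Sigma_hn \<gamma> h n) ((Ah \<gamma> h ^^ n) (zt - z))))"

primrec ytraj :: "real \<Rightarrow> real \<Rightarrow> nat \<Rightarrow> ('d::finite) st \<Rightarrow> 'd st \<Rightarrow> nat \<Rightarrow> 'd st" where
  "ytraj \<gamma> h n z zt 0 = zt - z"
| "ytraj \<gamma> h n z zt (Suc k) = Ah \<gamma> h (ytraj \<gamma> h n z zt k) - Lh \<gamma> h (Ek \<gamma> h n z zt (Suc k))"

end

theory Submission
  imports Defs
begin


lemma sq_sum_le: "norm (a + b :: 'a::real_normed_vector)^2 \<le> 2*norm a^2 + 2*norm b^2"
proof -
  have "norm (a+b) \<le> norm a + norm b" by (rule norm_triangle_ineq)
  hence "norm (a+b)^2 \<le> (norm a + norm b)^2" by (simp add: power_mono)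
  also have "\<dots> \<le> 2*norm a^2 + 2*norm b^2"
  proof -
    have "0 \<le> (norm a - norm b)^2" by simp
    thus ?thesis by (simp add: power2_eq_square algebra_simps)
  qed
  finally show ?thesis .
qed

lemma solve1:
  fixes c h A B :: real
  assumes "c \<noteq> 0" "h \<noteq> 0" "c*h*A = h^2/2*B"
  shows "A = h/(2*c)*B"
proof -
  have "A = (c*h*A)/(c*h)" using assms by simp
  also have "\<dots> = (h^2/2*B)/(c*h)" by (simp only: assms(3))
  also have "\<dots> = h/(2*c)*B" using assms by (simp add: field_simps power2_eq_square)
  finally show ?thesis .
qed

lemma step:
  fixes G :: "real^'d::finite \<Rightarrow> real^'d" and w p zt1 a E :: "'d st"
  assumes g: "\<gamma> > 0" "h > 0" and lip: "\<And>x x'. norm (G x - G x') \<le> L * norm (x - x')"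
  and eq: "Psi \<gamma> h G (w + p) zt1 = Psi \<gamma> h G w a + (Ah \<gamma> h p - Lh \<gamma> h E)"
  shows "norm (zt1 - a)^2 \<le> 2 * norm E ^2 + (h^2*L^2/(2*(1 - exp(-\<gamma>*h)))) *
     (norm (fst p)^2 + norm (fst (Ah \<gamma> h p - Lh \<gamma> h E))^2)"
proof -
  define c where "c = sqrt (1 - exp(-\<gamma>*h))"
  define e where "e = exp(-\<gamma>*h/2)"
  have ee: "exp(-\<gamma>*h) = e^2" unfolding e_def using exp_double[of "-\<gamma>*h/2"] by simp
  have "exp(-\<gamma>*h) < 1" using g by simp
  hence c2: "c^2 = 1 - exp(-\<gamma>*h)" and cpos: "c > 0" unfolding c_def by auto
  have epos: "e > 0" unfolding e_def by simp
  have e1: "e^2 \<le> 1" using ee \<open>exp(-\<gamma>*h) < 1\<close> by simp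
  obtain x v where w: "w = (x,v)" by (cases w)
  obtain u q where p: "p = (u,q)" by (cases p)
  obtain a1t bt where zt1: "zt1 = (a1t,bt)" by (cases zt1)
  obtain a1 b where a: "a = (a1,b)" by (cases a)
  obtain E1 E2 where E: "E = (E1,E2)" by (cases E)
  define uk where "uk = u + (h*e) *\<^sub>R q - (c*h) *\<^sub>R E1"
  have uk: "fst (Ah \<gamma> h p - Lh \<gamma> h E) = uk"
    unfolding uk_def Ah_def Lh_def p E c_def e_def by (simp add: algebra_simps)
  define X where "X = PsiX \<gamma> h G w a1"
  define Xt where "Xt = PsiX \<gamma> h G (w+p) a1t"
  have eqX: "Xt = X + uk" using arg_cong[OF eq, of fst] uk unfolding Psi_def X_def Xt_def zt1 a by simp
  have eqV: "PsiV \<gamma> h G (w+p) a1t bt = PsiV \<gamma> h G w a1 b + snd (Ah \<gamma> h p - Lh \<gamma> h E)"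
  proof -
    have "snd (Psi \<gamma> h G (w+p) zt1) = snd (Psi \<gamma> h G w a) + snd (Ah \<gamma> h p - Lh \<gamma> h E)"
      using eq by (metis snd_add)
    thus ?thesis unfolding Psi_def zt1 a snd_conv fst_conv .
  qed
  have eqX': "x + u + (h*e) *\<^sub>R (v+q) + (c*h) *\<^sub>R a1t - (h^2/2) *\<^sub>R G (x+u)
     = x + (h*e) *\<^sub>R v + (c*h) *\<^sub>R a1 - (h^2/2) *\<^sub>R G x + uk"
    using eqX unfolding Xt_def X_def PsiX_def w p c_def e_def by simp
  have eqV': "(e^2) *\<^sub>R (v+q) + c *\<^sub>R (e *\<^sub>R a1t + bt) - (h/2*e) *\<^sub>R (G (x+u) + G Xt)
     = (e^2) *\<^sub>R v + c *\<^sub>R (e *\<^sub>R a1 + b) - (h/2*e) *\<^sub>R (G x + G X)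
       + ((e^2) *\<^sub>R q - c *\<^sub>R (e *\<^sub>R E1 + E2))"
  proof -
    have ceq: "sqrt (1 - exp(-\<gamma>*h)) = c" unfolding c_def ..
    have eeq: "exp(-\<gamma>*h/2) = e" unfolding e_def ..
    have ceq2: "sqrt (1 - e^2) = c" unfolding c_def ee ..
    have "snd (Ah \<gamma> h p - Lh \<gamma> h E) = (e^2) *\<^sub>R q - c *\<^sub>R (e *\<^sub>R E1 + E2)"
      unfolding Ah_def Lh_def p E ceq eeq ee ceq2 by simp
    moreover have "PsiV \<gamma> h G (w+p) a1t bt = (e^2) *\<^sub>R (v+q) + c *\<^sub>R (e *\<^sub>R a1t + bt) - (h/2*e) *\<^sub>R (G (x+u) + G Xt)"
      unfolding PsiV_def Xt_def ceq eeq ee ceq2 w p by simp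
    moreover have "PsiV \<gamma> h G w a1 b = (e^2) *\<^sub>R v + c *\<^sub>R (e *\<^sub>R a1 + b) - (h/2*e) *\<^sub>R (G x + G X)"
      unfolding PsiV_def X_def ceq eeq ee ceq2 w by simp
    ultimately show ?thesis using eqV by simp
  qed
  have D1: "a1t - a1 = - E1 + (h/(2*c)) *\<^sub>R (G (x+u) - G x)"
  proof -
    { fix i
    have "(x + u + (h*e) *\<^sub>R (v+q) + (c*h) *\<^sub>R a1t - (h^2/2) *\<^sub>R G (x+u))$i
     = (x + (h*e) *\<^sub>R v + (c*h) *\<^sub>R a1 - (h^2/2) *\<^sub>R G x + uk)$i" by (simp only: eqX')
    hence "c*h*(a1t$i - a1$i + E1$i) = h^2/2 * (G (x+u) $i - G x $i)"
      unfolding uk_def by (simp add: algebra_simps)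
    from solve1[OF _ _ this] cpos g
    have "(a1t - a1)$i = (- E1 + (h/(2*c)) *\<^sub>R (G (x+u) - G x))$i"
      by simp }
    thus ?thesis by (simp add: vec_eq_iff)
  qed
  have D2: "bt - b = - E2 + (h/(2*c)) *\<^sub>R (e *\<^sub>R (G Xt - G X))"
  proof -
    { fix i
    have V: "((e^2) *\<^sub>R (v+q) + c *\<^sub>R (e *\<^sub>R a1t + bt) - (h/2*e) *\<^sub>R (G (x+u) + G Xt))$i
     = ((e^2) *\<^sub>R v + c *\<^sub>R (e *\<^sub>R a1 + b) - (h/2*e) *\<^sub>R (G x + G X)
       + ((e^2) *\<^sub>R q - c *\<^sub>R (e *\<^sub>R E1 + E2)))$i" by (simp only: eqV')
    have "(a1t - a1)$i = (- E1 + (h/(2*c)) *\<^sub>R (G (x+u) - G x))$i" by (simp only: D1)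
    hence "a1t$i - a1$i = - E1$i + h/(2*c) * (G (x+u)$i - G x$i)" by simp
    hence "c*e*(a1t$i - a1$i) = c*e*(- E1$i + h/(2*c) * (G (x+u)$i - G x$i))"
      by (simp only:)
    also have "\<dots> = c*e*(- E1$i) + h/2*e * (G (x+u)$i - G x$i)"
      using cpos by (simp add: field_simps)
    finally have D1i: "c*e*(a1t$i - a1$i) = c*e*(- E1$i) + h/2*e * (G (x+u)$i - G x$i)" .
    have "c*(bt$i - b$i + E2$i) = h*e/2*(G Xt$i - G X$i)"
      using V D1i by (simp add: algebra_simps)
    hence "bt$i - b$i + E2$i = h/(2*c)*(e*(G Xt$i - G X$i))"
      using cpos by (simp add: field_simps)
    hence "(bt - b)$i = (- E2 + (h/(2*c)) *\<^sub>R (e *\<^sub>R (G Xt - G X)))$i"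
      by simp }
    thus ?thesis by (simp add: vec_eq_iff)
  qed
  define DG where "DG = G (x+u) - G x"
  define DG' where "DG' = G Xt - G X"
  have diff: "zt1 - a = - E + (h/(2*c)) *\<^sub>R (DG, e *\<^sub>R DG')"
    unfolding zt1 a E DG_def DG'_def using D1 D2 by simp
  have nDG: "norm DG ^2 \<le> L^2 * norm u^2"
  proof -
    have "norm DG \<le> L * norm u" unfolding DG_def using lip[of "x+u" x] by simp
    hence "norm DG^2 \<le> (L * norm u)^2" by (simp add: power_mono)
    thus ?thesis by (simp add: power_mult_distrib)
  qed
  have nDG': "norm DG' ^2 \<le> L^2 * norm uk^2"
  proof -
    have "norm DG' \<le> L * norm uk" unfolding DG'_def eqX using lip[of "X+uk" X] by simp
    hence "norm DG'^2 \<le> (L * norm uk)^2" by (simp add: power_mono)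
    thus ?thesis by (simp add: power_mult_distrib)
  qed
  have "norm (zt1 - a)^2 \<le> 2 * norm (-E)^2 + 2 * norm ((h/(2*c)) *\<^sub>R (DG, e *\<^sub>R DG'))^2"
    unfolding diff by (rule sq_sum_le)
  also have "norm ((h/(2*c)) *\<^sub>R (DG, e *\<^sub>R DG'))^2 = (h/(2*c))^2 * (norm DG^2 + e^2 * norm DG'^2)"
    using epos cpos g by (simp add: norm_Pair power_mult_distrib power_divide abs_mult algebra_simps)
  also have "\<dots> \<le> (h/(2*c))^2 * (L^2 * norm u^2 + L^2 * norm uk^2)"
  proof -
    have "e^2 * norm DG'^2 \<le> 1 * (L^2 * norm uk^2)"
      using e1 nDG' by (intro mult_mono) auto
    thus ?thesis using nDG by (intro mult_left_mono) auto
  qed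
  finally have "norm (zt1 - a)^2 \<le> 2 * norm E^2 + 2*(h/(2*c))^2 * (L^2 * norm u^2 + L^2 * norm uk^2)"
    by simp
  also have "2*(h/(2*c))^2 * (L^2 * norm u^2 + L^2 * norm uk^2)
     = (h^2*L^2/(2*c^2)) * (norm u^2 + norm uk^2)"
    using cpos by (simp add: field_simps power2_eq_square)
  finally show ?thesis unfolding c2 uk[symmetric] p by simp
qed


lemma lin_Ah: "linear (Ah \<gamma> h)"
  by (rule linearI) (auto simp: Ah_def algebra_simps)
lemma lin_Lh: "linear (Lh \<gamma> h)"
  by (rule linearI) (auto simp: Lh_def algebra_simps)
lemma lin_AhT: "linear (AhT \<gamma> h)"
  by (rule linearI) (auto simp: AhT_def algebra_simps)
lemma lin_LhT: "linear (LhT \<gamma> h)"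
  by (rule linearI) (auto simp: LhT_def algebra_simps)

lemma lin_pow: fixes f :: "'a::real_vector \<Rightarrow> 'a" assumes "linear f" shows "linear (f ^^ m)"
  using assms
proof (induction m)
  case 0
  have "f ^^ 0 = id" by (rule ext) simp
  then show ?case using linear_id by (simp add: id_def)
next
  case (Suc m)
  then show ?case unfolding funpow.simps(2) by (intro linear_compose) auto
qed

lemma adj_Ah: "inner (Ah \<gamma> h q) p = inner q (AhT \<gamma> h p)"
  by (cases q, cases p) (simp add: Ah_def AhT_def inner_add_left inner_add_right algebra_simps inner_commute)
lemma adj_Lh: "inner (Lh \<gamma> h q) p = inner q (LhT \<gamma> h p)"
  by (cases q, cases p) (simp add: Lh_def LhT_def inner_add_left inner_add_right algebra_simps inner_commute)

lemma adj_Ah_pow: "inner ((Ah \<gamma> h ^^ m) q) p = inner q ((AhT \<gamma> h ^^ m) p)"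
proof (induction m arbitrary: p)
  case 0 then show ?case by simp
next
  case (Suc m)
  have "inner ((Ah \<gamma> h ^^ Suc m) q) p = inner ((Ah \<gamma> h ^^ m) q) (AhT \<gamma> h p)"
    by (simp add: adj_Ah)
  also have "\<dots> = inner q ((AhT \<gamma> h ^^ m) (AhT \<gamma> h p))" by (rule Suc.IH)
  also have "\<dots> = inner q ((AhT \<gamma> h ^^ Suc m) p)" by (simp only: funpow_Suc_right o_apply)
  finally show ?case .
qed

lemma lin_Sigma: "linear (Sigma_hn \<gamma> h n)"
proof -
  have "linear (\<lambda>p. \<Sum>k=1..n. (Ah \<gamma> h ^^ (n-k)) (Lh \<gamma> h (LhT \<gamma> h ((AhT \<gamma> h ^^ (n-k)) p))))"
  proof (rule linear_compose_sum, intro ballI)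
    fix k
    have "linear ((Ah \<gamma> h ^^ (n-k)) \<circ> Lh \<gamma> h \<circ> LhT \<gamma> h \<circ> (AhT \<gamma> h ^^ (n-k)))"
      by (intro linear_compose lin_pow lin_Ah lin_Lh lin_LhT lin_AhT)
    thus "linear (\<lambda>p. (Ah \<gamma> h ^^ (n-k)) (Lh \<gamma> h (LhT \<gamma> h ((AhT \<gamma> h ^^ (n-k)) p))))"
      by (simp add: o_def)
  qed
  thus ?thesis unfolding Sigma_hn_def[abs_def] .
qed

lemma LhT_zero:
  assumes "\<gamma> > 0" "h > 0" "LhT \<gamma> h p = 0"
  shows "p = 0"
proof -
  have "0 < \<gamma>*h" using assms by simp
  hence "exp (-\<gamma>*h) < 1" by simp
  hence c: "sqrt (1 - exp (-\<gamma>*h)) \<noteq> 0" using assms by auto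
  obtain p1 p2 where p: "p = (p1,p2)" by (cases p)
  have "h *\<^sub>R p1 + exp (-\<gamma>*h/2) *\<^sub>R p2 = 0" "p2 = 0"
    using assms(3) c unfolding LhT_def p by (auto simp: prod_eq_iff)
  thus ?thesis using assms p by (simp add: zero_prod_def)
qed

lemma Sigma_inner:
  "inner p (Sigma_hn \<gamma> h n p) = (\<Sum>k=1..n. norm (LhT \<gamma> h ((AhT \<gamma> h ^^ (n-k)) p))^2)"
  unfolding Sigma_hn_def inner_sum_right
  by (rule sum.cong) (simp_all add: inner_commute[of p] adj_Ah_pow adj_Lh power2_norm_eq_inner)

lemma Sigma_surj:
  assumes "\<gamma> > 0" "h > 0" "n \<ge> 1"
  shows "Sigma_hn \<gamma> h n (inv (Sigma_hn \<gamma> h n) r) = r"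
proof -
  have "inj (Sigma_hn \<gamma> h n)"
  proof (subst linear_injective_0[OF lin_Sigma], intro allI impI)
    fix p assume "Sigma_hn \<gamma> h n p = 0"
    hence "(\<Sum>k=1..n. norm (LhT \<gamma> h ((AhT \<gamma> h ^^ (n-k)) p))^2) = 0"
      using Sigma_inner[of p \<gamma> h n] by simp
    hence "\<forall>k\<in>{1..n}. norm (LhT \<gamma> h ((AhT \<gamma> h ^^ (n-k)) p))^2 = 0"
      by (subst (asm) sum_nonneg_eq_0_iff) auto
    moreover have "n \<in> {1..n}" using assms by simp
    ultimately have "norm (LhT \<gamma> h ((AhT \<gamma> h ^^ (n-n)) p))^2 = 0" by blast
    hence "LhT \<gamma> h p = 0" by simp
    thus "p = 0" using LhT_zero assms by blast
  qed
  hence "surj (Sigma_hn \<gamma> h n)"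
    using linear_injective_imp_surjective[OF lin_Sigma] by blast
  thus ?thesis by (rule surj_f_inv_f)
qed

lemma ytraj_formula:
  "ytraj \<gamma> h n z zt k = (Ah \<gamma> h ^^ k) (zt - z)
      - (\<Sum>j=1..k. (Ah \<gamma> h ^^ (k-j)) (Lh \<gamma> h (Ek \<gamma> h n z zt j)))"
proof (induction k)
  case 0 then show ?case by simp
next
  case (Suc k)
  have la: "linear (Ah \<gamma> h)" by (rule lin_Ah)
  have "ytraj \<gamma> h n z zt (Suc k) = Ah \<gamma> h ((Ah \<gamma> h ^^ k) (zt - z))
      - (\<Sum>j=1..k. Ah \<gamma> h ((Ah \<gamma> h ^^ (k-j)) (Lh \<gamma> h (Ek \<gamma> h n z zt j))))
      - Lh \<gamma> h (Ek \<gamma> h n z zt (Suc k))"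
    using Suc by (simp add: linear_diff[OF la] linear_sum[OF la])
  also have "(\<Sum>j=1..k. Ah \<gamma> h ((Ah \<gamma> h ^^ (k-j)) (Lh \<gamma> h (Ek \<gamma> h n z zt j))))
     = (\<Sum>j=1..k. (Ah \<gamma> h ^^ (Suc k-j)) (Lh \<gamma> h (Ek \<gamma> h n z zt j)))"
    by (rule sum.cong) (auto simp: Suc_diff_le)
  finally show ?case by (simp add: algebra_simps)
qed

lemma ytraj_n:
  assumes "\<gamma> > 0" "h > 0" "n \<ge> 1"
  shows "ytraj \<gamma> h n z zt n = 0"
proof -
  have "(\<Sum>j=1..n. (Ah \<gamma> h ^^ (n-j)) (Lh \<gamma> h (Ek \<gamma> h n z zt j)))
    = Sigma_hn \<gamma> h n (inv (Sigma_hn \<gamma> h n) ((Ah \<gamma> h ^^ n) (zt - z)))"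
    unfolding Sigma_hn_def Ek_def ..
  also have "\<dots> = (Ah \<gamma> h ^^ n) (zt - z)" using Sigma_surj[OF assms] .
  finally show ?thesis unfolding ytraj_formula by simp
qed


definition invPsi :: "real \<Rightarrow> real \<Rightarrow> (real^('d::finite) \<Rightarrow> real^'d) \<Rightarrow> 'd st \<Rightarrow> 'd st \<Rightarrow> 'd st" where
  "invPsi \<gamma> h G w t = (let c = sqrt (1 - exp(-\<gamma>*h)); e = exp(-\<gamma>*h/2);
      a = (1/(c*h)) *\<^sub>R (fst t - fst w - (h*e) *\<^sub>R snd w + (h^2/2) *\<^sub>R G (fst w))
    in (a, (1/c) *\<^sub>R (snd t - exp(-\<gamma>*h) *\<^sub>R snd w + (h/2*e) *\<^sub>R (G (fst w) + G (fst t))) - e *\<^sub>R a))"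

lemma Psi_invPsi:
  assumes "\<gamma> > 0" "h > 0"
  shows "Psi \<gamma> h G w (invPsi \<gamma> h G w t) = t"
proof -
  define c where "c = sqrt (1 - exp(-\<gamma>*h))"
  define e where "e = exp(-\<gamma>*h/2)"
  have "0 < \<gamma>*h" using assms by simp
  hence "exp (-\<gamma>*h) < 1" by simp
  hence cpos: "c > 0" unfolding c_def by simp
  define a where "a = (1/(c*h)) *\<^sub>R (fst t - fst w - (h*e) *\<^sub>R snd w + (h^2/2) *\<^sub>R G (fst w))"
  have inv: "invPsi \<gamma> h G w t = (a, (1/c) *\<^sub>R (snd t - exp(-\<gamma>*h) *\<^sub>R snd w + (h/2*e) *\<^sub>R (G (fst w) + G (fst t))) - e *\<^sub>R a)"
    unfolding invPsi_def Let_def c_def e_def a_def ..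
  have X: "PsiX \<gamma> h G w a = fst t"
  proof -
    have "PsiX \<gamma> h G w a = fst w + (h*e) *\<^sub>R snd w + (c*h) *\<^sub>R a - (h^2/2) *\<^sub>R G (fst w)"
      unfolding PsiX_def c_def e_def by simp
    also have "(c*h) *\<^sub>R a = fst t - fst w - (h*e) *\<^sub>R snd w + (h^2/2) *\<^sub>R G (fst w)"
      unfolding a_def using cpos assms by simp
    finally show ?thesis by simp
  qed
  have V: "PsiV \<gamma> h G w a ((1/c) *\<^sub>R (snd t - exp(-\<gamma>*h) *\<^sub>R snd w + (h/2*e) *\<^sub>R (G (fst w) + G (fst t))) - e *\<^sub>R a) = snd t"
  proof -
    have "c *\<^sub>R (e *\<^sub>R a + ((1/c) *\<^sub>R (snd t - exp(-\<gamma>*h) *\<^sub>R snd w + (h/2*e) *\<^sub>R (G (fst w) + G (fst t))) - e *\<^sub>R a))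
      = snd t - exp(-\<gamma>*h) *\<^sub>R snd w + (h/2*e) *\<^sub>R (G (fst w) + G (fst t))"
      using cpos by simp
    thus ?thesis unfolding PsiV_def X c_def[symmetric] e_def[symmetric] by simp
  qed
  show ?thesis unfolding inv Psi_def using X V by simp
qed

lemma Psi_inj:
  assumes "\<gamma> > 0" "h > 0" and lip: "\<And>x x'. norm (G x - G x') \<le> L * norm (x - x')"
    and "Psi \<gamma> h G w a' = Psi \<gamma> h G w a"
  shows "a' = a"
proof -
  have "Psi \<gamma> h G (w + 0) a' = Psi \<gamma> h G w a + (Ah \<gamma> h 0 - Lh \<gamma> h 0)"
    using assms(4) by (simp add: Ah_def Lh_def zero_prod_def[symmetric])
  from step[OF assms(1,2) lip this]
  have "norm (a' - a)^2 \<le> 0" by (simp add: Ah_def Lh_def zero_prod_def[symmetric])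
  thus ?thesis by simp
qed

lemma PsiN_snoc: "PsiN \<gamma> h G z (xs @ [x]) = Psi \<gamma> h G (PsiN \<gamma> h G z xs) x"
  unfolding PsiN_def by simp

lemma PsiN_take_Suc: "k < length xs \<Longrightarrow> PsiN \<gamma> h G z (take (Suc k) xs) = Psi \<gamma> h G (PsiN \<gamma> h G z (take k xs)) (xs!k)"
  by (simp add: take_Suc_conv_app_nth PsiN_snoc)

lemma coal_prop:
  fixes n :: nat and xs :: "('d::finite) st list" and z zt :: "'d st" and y :: "nat \<Rightarrow> 'd st"
  assumes g: "\<gamma> > 0" "h > 0" and lip: "\<And>x x'. norm (G x - G x') \<le> L * norm (x - x')"
    and y0: "y 0 = zt - z"
  defines "P \<equiv> \<lambda>zs. length zs = n \<and>
      (\<forall>k\<in>{1..n}. PsiN \<gamma> h G zt (take k zs) = PsiN \<gamma> h G z (take k xs) + y k)"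
  shows "P (coal \<gamma> h G n z zt y xs)"
proof -
  define T where "T k = PsiN \<gamma> h G z (take k xs) + y k" for k
  have T0: "T 0 = zt" unfolding T_def y0 PsiN_def by simp
  have allk: "PsiN \<gamma> h G zt (take k zs) = T k" if "P zs" "k \<le> n" for zs k
  proof (cases k)
    case 0 then show ?thesis using T0 by (simp add: PsiN_def)
  next
    case (Suc m)
    hence "k \<in> {1..n}" using that(2) by simp
    then show ?thesis using that(1) unfolding P_def T_def by blast
  qed
  have stepP: "Psi \<gamma> h G (T i) (zs!i) = T (Suc i)" if "P zs" "i < n" for zs i
  proof -
    have "length zs = n" using that unfolding P_def by simp
    thus ?thesis using allk[OF that(1), of i] allk[OF that(1), of "Suc i"] that(2)
      PsiN_take_Suc[of i zs] by simp
  qed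
  define zs0 where "zs0 = map (\<lambda>k. invPsi \<gamma> h G (T k) (T (Suc k))) [0..<n]"
  have "PsiN \<gamma> h G zt (take k zs0) = T k" if "k \<le> n" for k
    using that
  proof (induction k)
    case 0 then show ?case using T0 by (simp add: PsiN_def)
  next
    case (Suc k)
    have "PsiN \<gamma> h G zt (take (Suc k) zs0) = Psi \<gamma> h G (PsiN \<gamma> h G zt (take k zs0)) (zs0!k)"
      using Suc.prems by (intro PsiN_take_Suc[of k zs0]) (simp add: zs0_def)
    also have "\<dots> = T (Suc k)" using Suc by (simp add: zs0_def Psi_invPsi g)
    finally show ?case .
  qed
  hence ex: "P zs0" unfolding P_def T_def by (simp add: zs0_def)
  have uniq: "zs = zs0" if "P zs" for zs
  proof (rule nth_equalityI)
    show "length zs = length zs0" using that ex unfolding P_def by simp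
    fix i assume "i < length zs"
    hence i: "i < n" using that unfolding P_def by simp
    have "Psi \<gamma> h G (T i) (zs!i) = Psi \<gamma> h G (T i) (zs0!i)"
      using stepP[OF that i] stepP[OF ex i] by simp
    thus "zs!i = zs0!i" by (rule Psi_inj[OF g lip])
  qed
  have "\<exists>!zs. P zs" using ex uniq by blast
  hence "P (THE zs. P zs)" by (rule theI')
  thus ?thesis unfolding coal_def P_def .
qed


theorem mainTheorem7:
  fixes \<gamma> h L :: real and n :: nat and U :: "real^'d \<Rightarrow> real"
    and G :: "real^'d \<Rightarrow> real^'d" and z zt :: "'d st" and \<xi> :: "'d st list"
  assumes "\<gamma> > 0" and "h > 0" and "n \<ge> 1"
    and "\<And>x. (U has_derivative (\<lambda>v. G x \<bullet> v)) (at x)"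
    and "\<exists>G'. (\<forall>x. (G has_derivative blinfun_apply (G' x)) (at x)) \<and> continuous_on UNIV G'"
    and "\<And>x x'. norm (G x - G x') \<le> L * norm (x - x')"
    and "length \<xi> = n"
  shows "(\<Sum>i<n. norm (coal \<gamma> h G n z zt (ytraj \<gamma> h n z zt) \<xi> ! i - \<xi> ! i)^2)
     \<le> 2 * (\<Sum>k=1..n. norm (Ek \<gamma> h n z zt k)^2)
       + (h^2 * L^2 / (1 - exp (-\<gamma>*h))) * (\<Sum>k=0..n-1. norm (fst (ytraj \<gamma> h n z zt k))^2)"
proof -
  note g = assms(1,2) and lip = assms(6)
  define Y where "Y = ytraj \<gamma> h n z zt"
  define cz where "cz = coal \<gamma> h G n z zt Y \<xi>"
  define W where "W k = PsiN \<gamma> h G z (take k \<xi>)" for k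
  define K where "K = h^2*L^2/(2*(1 - exp(-\<gamma>*h)))"
  define f where "f k = norm (fst (Y k))^2" for k
  define Eg where "Eg k = norm (Ek \<gamma> h n z zt k)^2" for k
  have "0 < \<gamma>*h" using g by simp
  hence ex1: "exp (-\<gamma>*h) < 1" by simp
  hence Kpos: "K \<ge> 0" unfolding K_def by simp
  have Y0: "Y 0 = zt - z" unfolding Y_def by simp
  have P: "length cz = n \<and> (\<forall>k\<in>{1..n}. PsiN \<gamma> h G zt (take k cz) = W k + Y k)"
    using coal_prop[of \<gamma> h G L Y zt z n \<xi>, OF g lip Y0] unfolding cz_def W_def .
  have allk: "PsiN \<gamma> h G zt (take k cz) = W k + Y k" if "k \<le> n" for k
  proof (cases k)
    case 0 then show ?thesis using Y0 by (simp add: PsiN_def W_def)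
  next
    case (Suc m)
    hence "k \<in> {1..n}" using that by simp
    then show ?thesis using P by blast
  qed
  have bound: "norm (cz!i - \<xi>!i)^2 \<le> 2 * Eg (Suc i) + K * (f i + f (Suc i))" if i: "i < n" for i
  proof -
    have "Psi \<gamma> h G (W i + Y i) (cz!i) = W (Suc i) + Y (Suc i)"
      using allk[of i] allk[of "Suc i"] i P PsiN_take_Suc[of i cz] by simp
    also have "W (Suc i) = Psi \<gamma> h G (W i) (\<xi>!i)"
      unfolding W_def using i assms(7) by (simp add: PsiN_take_Suc)
    also have "Y (Suc i) = Ah \<gamma> h (Y i) - Lh \<gamma> h (Ek \<gamma> h n z zt (Suc i))"
      unfolding Y_def by simp
    finally have eq: "Psi \<gamma> h G (W i + Y i) (cz!i) = Psi \<gamma> h G (W i) (\<xi>!i) + (Ah \<gamma> h (Y i) - Lh \<gamma> h (Ek \<gamma> h n z zt (Suc i)))" .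
    have "fst (Ah \<gamma> h (Y i) - Lh \<gamma> h (Ek \<gamma> h n z zt (Suc i))) = fst (Y (Suc i))"
      unfolding Y_def by simp
    with step[OF g lip eq] show ?thesis unfolding K_def f_def Eg_def by simp
  qed
  have "(\<Sum>i<n. norm (cz!i - \<xi>!i)^2) \<le> (\<Sum>i<n. 2 * Eg (Suc i) + K * (f i + f (Suc i)))"
    by (rule sum_mono) (rule bound, simp)
  also have "\<dots> = 2 * (\<Sum>i<n. Eg (Suc i)) + K * ((\<Sum>i<n. f i) + (\<Sum>i<n. f (Suc i)))"
    by (simp add: sum.distrib sum_distrib_left distrib_left)
  also have "(\<Sum>i<n. f (Suc i)) \<le> (\<Sum>i<n. f i)"
  proof -
    have "Y n = 0" unfolding Y_def by (rule ytraj_n[OF g assms(3)])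
    hence "f n = 0" unfolding f_def by simp
    have "(\<Sum>i<Suc n. f i) = f 0 + (\<Sum>i<n. f (Suc i))" by (rule sum.lessThan_Suc_shift)
    moreover have "(\<Sum>i<Suc n. f i) = (\<Sum>i<n. f i) + f n" by simp
    moreover have "f 0 \<ge> 0" unfolding f_def by simp
    ultimately show ?thesis using \<open>f n = 0\<close> by linarith
  qed
  hence "2 * (\<Sum>i<n. Eg (Suc i)) + K * ((\<Sum>i<n. f i) + (\<Sum>i<n. f (Suc i)))
     \<le> 2 * (\<Sum>i<n. Eg (Suc i)) + K * ((\<Sum>i<n. f i) + (\<Sum>i<n. f i))"
    using Kpos by (simp add: mult_left_mono)
  also have "(\<Sum>i<n. Eg (Suc i)) = (\<Sum>k=1..n. Eg k)"
    using sum.atLeast1_atMost_eq[of Eg n] by simp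
  also have "{0..n-1} = {..<n}" using assms(3) by auto
  hence "(\<Sum>i<n. f i) = (\<Sum>k=0..n-1. f k)" by simp
  also have "K * ((\<Sum>k=0..n-1. f k) + (\<Sum>k=0..n-1. f k)) = (h^2 * L^2 / (1 - exp (-\<gamma>*h))) * (\<Sum>k=0..n-1. f k)"
  proof -
    obtain a where a: "a = h^2 * L^2 / (1 - exp (-\<gamma>*h))" by blast
    have "K = a / 2" unfolding K_def a by simp
    hence "K * ((\<Sum>k=0..n-1. f k) + (\<Sum>k=0..n-1. f k)) = a * (\<Sum>k=0..n-1. f k)" by simp
    thus ?thesis unfolding a .
  qed
  finally show ?thesis unfolding cz_def Y_def f_def Eg_def .
qed
end
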